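(* Let $n\ge 1$ and $d\in\mathbb{N}$ be integers, and define $N$ by $N(n,d)=N+1$. Let $\{r_k\}_{k\in\mathbb{N}}$ be a sequence of positive real numbers and, for each $k\in\mathbb{N}$, let $A_k=\{\mathbf{a}^k_0,\ldots,\mathbf{a}^k_N\}\subset\mathbb{R}^n$ be a set of $N+1$ distinct points. Suppose that: (1) $A_k$ is contained in the closed ball of radius $r_k$ centred at $\mathbf{a}^k_0$; (2) $\lim_{k\to\infty}\mathbf{a}^k_0=\boldsymbol{\xi}$ for some $\boldsymbol{\xi}\in\mathbb{R}^n$; (3) $\lim_{k\to\infty}r_k=0$; (4) there exists $c>0$ independent of $k$ such that $|\operatorname{Det} V(A_k)|\ge c\cdot r_k^{\,n\cdot N(n+1,d-1)}$ for all $k\in\mathbb{N}$. If $X\subset\mathbb{R}^n$ is a closed subset with $\bigcup_k A_k\subset X$, then $\tau^d_{N,\boldsymbol{\xi}}(X)=\mathcal{P}_d^*$.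
   Context: $N(n,d):=\binom{n+d}{d}$ (with $N(m,-1):=0$); it is the dimension of the space $\mathcal{P}_d$ of real polynomials in $n$ variables of degree $\le d$, and $\mathcal{P}_d^*$ is its dual. $I(n,d)$ is the set of multi-indices $\mathbf{j}=(j_1,\dots,j_n)\in\mathbb{Z}_{\ge0}^n$ with $|\mathbf{j}|=j_1+\dots+j_n\le d$, and $\mathbf{x}^{\mathbf{j}}=x_1^{j_1}\cdots x_n^{j_n}$. For a set $A=\{\mathbf{a}_0,\dots,\mathbf{a}_N\}$ of $N(n,d)$ points, with orderings of $A$ and of $I(n,d)=\{\mathbf{j}_0,\dots,\mathbf{j}_N\}$ fixed, the Vandermonde matrix is $V(A)=(\mathbf{a}_i^{\mathbf{j}_l})_{0\le i,l\le N}$; $|\operatorname{Det}V(A)|$ does not depend on the orderings. For $\mathbf{a}\in\mathbb{R}^n$ and $|\mathbf{p}|\le d$, $\delta^{(\mathbf{p})}_{\mathbf{a}}\in\mathcal{P}_d^*$ is $f\mapsto(-1)^{|\mathbf{p}|}\partial^{|\mathbf{p}|}f/\partial\mathbf{x}^{\mathbf{p}}(\mathbf{a})$, and $\delta_{\mathbf{a}}=\delta^{(\mathbf{0})}_{\mathbf{a}}$ (evaluation at $\mathbf{a}$). For $X\subset\mathbb{R}^n$, a bundle over $X$ is a subset $E\subset X\times\mathcal{P}_d^*$ whose fibres $E_{\mathbf{a}}=\{\xi:(\mathbf{a},\xi)\in E\}$ are linear subspaces. Higher order paratangent bundle $\tau^d_N(X)$ (Bierstone–Milman–Paw\l ucki):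 put $E_0=\{(\mathbf{a},\lambda\delta_{\mathbf{a}}):\mathbf{a}\in X,\lambda\in\mathbb{R}\}$. Given $E_k$, let $\Delta E_k$ be the set of $(\mathbf{a}_0,\dots,\mathbf{a}_N,\xi_0+\dots+\xi_N)\in X^{N+1}\times\mathcal{P}_d^*$ with $\mathbf{a}_i\in X$, $\xi_i\in E_{k,\mathbf{a}_i}$ and $|\mathbf{a}_i-\mathbf{a}_0|^{d-|\alpha|}\,|\xi_i((\mathbf{x}-\mathbf{a}_i)^\alpha)|\le1$ for all multi-indices $|\alpha|\le d$ and $0\le i\le N$. Let $E'_k$ be the set of $(\mathbf{a},\xi)\in X\times\mathcal{P}_d^*$ such that $(\mathbf{a},\dots,\mathbf{a},\xi)$ lies in the closure of $\Delta E_k$, and let $E_{k+1}$ be the bundle whose fibre at $\mathbf{a}$ is the linear span of $E'_{k,\mathbf{a}}$. The sequence $E_0\subset E_1\subset\cdots$ stabilizes, and $\tau^d_N(X):=E_{2\dim\mathcal{P}_d^*}$ is its stable value; $\tau^d_{N,\mathbf{a}}(X)$ denotes its fibre at $\mathbf{a}\in X$. *)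

theory Defs
  imports "HOL-Analysis.Analysis" "HOL-Combinatorics.Permutations"
begin

text \<open>Points of R^n are vectors of type real^'n, with n = CARD('n).
 Multi-indices are functions 'n => nat; |j| = sum j UNIV.
 A polynomial of degree at most d is determined by its coefficients on the monomial
 basis x^j, j in I(n,d); hence an element of the dual space P_d^* is represented by
 its values on the monomials, i.e. by a function ('n => nat) => real that vanishes
 outside I(n,d).  A polynomial with coefficient function c is sent by xi to
 sum over j in I(n,d) of c j * xi j.\<close>

definition Nd :: "nat \<Rightarrow> int \<Rightarrow> nat" where
  "Nd m d = (if d < 0 then 0 else (m + nat d) choose (nat d))"

definition mons :: "nat \<Rightarrow> ('n::finite \<Rightarrow> nat) set" where
  "mons d = {j. sum j UNIV \<le> d}"

definition NN :: "'n::finite itself \<Rightarrow> nat \<Rightarrow> nat" where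
  "NN T d = Nd CARD('n) (int d) - 1"

definition Pdual :: "nat \<Rightarrow> (('n::finite \<Rightarrow> nat) \<Rightarrow> real) set" where
  "Pdual d = {xi. \<forall>j. j \<notin> mons d \<longrightarrow> xi j = 0}"

definition monom :: "real^'n \<Rightarrow> ('n::finite \<Rightarrow> nat) \<Rightarrow> real" where
  "monom a j = (\<Prod>i\<in>UNIV. (a$i) ^ (j i))"

definition delta :: "nat \<Rightarrow> real^'n \<Rightarrow> (('n::finite \<Rightarrow> nat) \<Rightarrow> real)" where
  "delta d a = (\<lambda>j. if j \<in> mons d then monom a j else 0)"

text \<open>xi((x - a)^alpha), using the binomial expansion of (x - a)^alpha in the monomial basis\<close>
definition shift_eval :: "nat \<Rightarrow> (('n::finite \<Rightarrow> nat) \<Rightarrow> real) \<Rightarrow> real^'n \<Rightarrow> ('n \<Rightarrow> nat) \<Rightarrow> real" where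
  "shift_eval d xi a alpha =
     (\<Sum>beta\<in>mons d. (if (\<forall>i. beta i \<le> alpha i)
         then (\<Prod>i\<in>UNIV. of_nat (alpha i choose beta i) * (- (a$i)) ^ (alpha i - beta i))
         else 0) * xi beta)"

definition lspan :: "(('n \<Rightarrow> nat) \<Rightarrow> real) set \<Rightarrow> (('n \<Rightarrow> nat) \<Rightarrow> real) set" where
  "lspan S = {(\<lambda>j. \<Sum>v\<in>F. c v * v j) | F c. finite F \<and> F \<subseteq> S}"

text \<open>Bundles over X: maps from points to fibres (empty fibre off X).
 Tuples (a_0,...,a_N) are functions nat => real^'n that are 0 at indices > N;
 the closure is taken in the product topology.\<close>

definition E0 :: "(real^'n) set \<Rightarrow> nat \<Rightarrow> real^'n \<Rightarrow> (('n::finite \<Rightarrow> nat) \<Rightarrow> real) set" where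
  "E0 X d a = (if a \<in> X then {(\<lambda>j. t * delta d a j) | t. True} else {})"

definition DeltaE :: "(real^'n) set \<Rightarrow> nat \<Rightarrow> (real^'n \<Rightarrow> (('n::finite \<Rightarrow> nat) \<Rightarrow> real) set)
    \<Rightarrow> ((nat \<Rightarrow> real^'n) \<times> (('n \<Rightarrow> nat) \<Rightarrow> real)) set" where
  "DeltaE X d E = {(p, xi). (\<forall>i. NN TYPE('n) d < i \<longrightarrow> p i = 0) \<and>
      (\<exists>xis. (\<forall>i\<le>NN TYPE('n) d. p i \<in> X \<and> xis i \<in> E (p i) \<and>
               (\<forall>alpha\<in>mons d. norm (p i - p 0) ^ (d - sum alpha UNIV)
                    * \<bar>shift_eval d (xis i) (p i) alpha\<bar> \<le> 1))
        \<and> xi = (\<lambda>j. \<Sum>i\<le>NN TYPE('n) d. xis i j))}"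

definition diag :: "nat \<Rightarrow> real^'n::finite \<Rightarrow> nat \<Rightarrow> real^'n" where
  "diag d a = (\<lambda>i. if i \<le> NN TYPE('n) d then a else 0)"

definition Eprime :: "(real^'n) set \<Rightarrow> nat \<Rightarrow> (real^'n \<Rightarrow> (('n::finite \<Rightarrow> nat) \<Rightarrow> real) set)
    \<Rightarrow> real^'n \<Rightarrow> (('n \<Rightarrow> nat) \<Rightarrow> real) set" where
  "Eprime X d E a = {xi. a \<in> X \<and> (diag d a, xi) \<in> closure (DeltaE X d E)}"

definition Estep :: "(real^'n) set \<Rightarrow> nat \<Rightarrow> (real^'n \<Rightarrow> (('n::finite \<Rightarrow> nat) \<Rightarrow> real) set)
    \<Rightarrow> real^'n \<Rightarrow> (('n \<Rightarrow> nat) \<Rightarrow> real) set" where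
  "Estep X d E a = (if a \<in> X then lspan (Eprime X d E a) else {})"

definition Ek :: "(real^'n) set \<Rightarrow> nat \<Rightarrow> nat \<Rightarrow> real^'n \<Rightarrow> (('n::finite \<Rightarrow> nat) \<Rightarrow> real) set" where
  "Ek X d k = (Estep X d ^^ k) (E0 X d)"

text \<open>higher order paratangent bundle tau^d_N(X) = E_{2 dim P_d^*}\<close>
definition paratangent :: "(real^'n) set \<Rightarrow> nat \<Rightarrow> real^'n \<Rightarrow> (('n::finite \<Rightarrow> nat) \<Rightarrow> real) set" where
  "paratangent X d = Ek X d (2 * Nd CARD('n) (int d))"

definition ldet :: "nat \<Rightarrow> (nat \<Rightarrow> nat \<Rightarrow> real) \<Rightarrow> real" where
  "ldet N M = (\<Sum>p | p permutes {..N}. of_int (sign p) * (\<Prod>i\<le>N. M i (p i)))"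

text \<open>|Det V(A)| for A = {a 0, ..., a N}, with a fixed (arbitrary) enumeration of I(n,d);
 the absolute value does not depend on it.\<close>
definition abs_vdet :: "nat \<Rightarrow> (nat \<Rightarrow> real^'n::finite) \<Rightarrow> real" where
  "abs_vdet d a = (let e = (SOME e. bij_betw e {..NN TYPE('n) d} (mons d)) in
      \<bar>ldet (NN TYPE('n) d) (\<lambda>i l. monom (a i) (e l))\<bar>)"

end

theory Submission
  imports Defs "Jordan_Normal_Form.Determinant"
begin

definition GG :: "'a set \<Rightarrow> nat \<Rightarrow> ('a \<Rightarrow> nat) set" where
  "GG I d = {b. (\<forall>x. x \<notin> I \<longrightarrow> b x = 0) \<and> sum b I \<le> d}"

lemma GG_empty: "GG {} d = {\<lambda>_. 0}"
  unfolding GG_def by (auto simp: fun_eq_iff)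

lemma GG_insert_bij:
  assumes "finite I" "i \<notin> I"
  shows "bij_betw (\<lambda>b. (b i, b(i:=0))) (GG (insert i I) d) (Sigma {..d} (\<lambda>m. GG I (d - m)))"
proof (rule bij_betwI[where g = "\<lambda>(m,c). c(i:=m)"])
  show "(\<lambda>b. (b i, b(i := 0))) \<in> GG (insert i I) d \<rightarrow> Sigma {..d} (\<lambda>m. GG I (d - m))"
  proof
    fix b assume b: "b \<in> GG (insert i I) d"
    have s: "sum b (insert i I) = b i + sum b I" using assms by simp
    have "sum (b(i:=0)) I = sum b I" using assms by (intro sum.cong) auto
    then show "(b i, b(i := 0)) \<in> Sigma {..d} (\<lambda>m. GG I (d - m))"
      using b s unfolding GG_def by auto
  qed
  show "(\<lambda>(m, c). c(i := m)) \<in> Sigma {..d} (\<lambda>m. GG I (d - m)) \<rightarrow> GG (insert i I) d"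
  proof
    fix p assume p: "p \<in> Sigma {..d} (\<lambda>m. GG I (d - m))"
    obtain m c where pc: "p = (m,c)" by force
    have "sum (c(i:=m)) I = sum c I" using assms by (intro sum.cong) auto
    then show "(case p of (m, c) \<Rightarrow> c(i := m)) \<in> GG (insert i I) d"
      using p assms unfolding pc GG_def by auto
  qed
qed (use assms in \<open>auto simp: GG_def fun_eq_iff\<close>)

lemma GG_finite_card:
  assumes "finite I"
  shows "finite (GG I d) \<and> card (GG I d) = (card I + d) choose d"
  using assms
proof (induction I arbitrary: d rule: finite_induct)
  case empty
  then show ?case by (simp add: GG_empty)
next
  case (insert i I)
  note bij = GG_insert_bij[OF insert(1,2), of d]
  have fin: "finite (Sigma {..d} (\<lambda>m. GG I (d - m)))"
    using insert(3) by (intro finite_SigmaI) auto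
  have "card (GG (insert i I) d) = card (Sigma {..d} (\<lambda>m. GG I (d - m)))"
    using bij_betw_same_card[OF bij] .
  also have "\<dots> = (\<Sum>m\<le>d. card (GG I (d - m)))"
    using insert(3) by (subst card_SigmaI) auto
  also have "\<dots> = (\<Sum>m\<le>d. (card I + (d - m)) choose (d - m))"
    using insert(3) by simp
  also have "\<dots> = (\<Sum>m\<le>d. (card I + m) choose m)"
    by (rule sum.reindex_bij_witness[where i="\<lambda>m. d - m" and j="\<lambda>m. d - m"]) auto
  also have "\<dots> = Suc (card I + d) choose d" by (rule sum_choose_lower)
  finally show ?case using bij_betw_finite[OF bij] fin insert by simp
qed

lemma GG_sum_aux:
  assumes "finite I"
  shows "(\<Sum>b\<in>GG I d. d - sum b I) = (\<Sum>k<d. card (GG I k))"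
proof -
  have fin: "finite (GG I d)" using GG_finite_card[OF assms(1)] by simp
  have "(\<Sum>b\<in>GG I d. d - sum b I) = (\<Sum>b\<in>GG I d. \<Sum>k<d. (if sum b I \<le> k then 1 else 0))"
  proof (rule sum.cong[OF refl])
    fix b assume "b \<in> GG I d"
    have e: "{k\<in>{..<d}. sum b I \<le> k} = {sum b I..<d}" by auto
    have "(\<Sum>k<d. (if sum b I \<le> k then 1 else 0)::nat) = card {k\<in>{..<d}. sum b I \<le> k}"
      by (simp add: sum.inter_filter[symmetric])
    then show "d - sum b I = (\<Sum>k<d. (if sum b I \<le> k then 1 else 0))"
      unfolding e by simp
  qed
  also have "\<dots> = (\<Sum>k<d. \<Sum>b\<in>GG I d. (if sum b I \<le> k then 1 else 0))"
    by (rule sum.swap)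
  also have "\<dots> = (\<Sum>k<d. card (GG I k))"
  proof (rule sum.cong[OF refl])
    fix k assume k: "k \<in> {..<d}"
    have "{b \<in> GG I d. sum b I \<le> k} = GG I k" using k unfolding GG_def by auto
    then show "(\<Sum>b\<in>GG I d. (if sum b I \<le> k then 1 else 0)) = card (GG I k)"
      using fin by (simp add: sum.inter_filter[symmetric])
  qed
  finally show ?thesis .
qed

lemma binom_aux: "Suc d * ((n + Suc d) choose Suc d) = Suc n * ((n + Suc d) choose d)"
proof -
  have "Suc d * ((n + Suc d) choose Suc d) = Suc (n + d) * ((n + d) choose d)"
    using Suc_times_binomial_eq[of "n+d" d] by (simp add: mult.commute)
  also have "\<dots> = Suc n * ((n + Suc d) choose d)"
    using binomial_absorb_comp[of "n + Suc d" d] by simp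
  finally show ?thesis .
qed

lemma GG_sum:
  assumes "finite I" "d > 0"
  shows "(\<Sum>b\<in>GG I d. sum b I) = card I * ((card I + d) choose (d - 1))"
proof -
  let ?n = "card I"
  have fin: "finite (GG I d)" and cd: "card (GG I d) = (?n + d) choose d"
    using GG_finite_card[OF assms(1)] by auto
  have le: "\<And>b. b \<in> GG I d \<Longrightarrow> sum b I \<le> d" unfolding GG_def by auto
  have "(\<Sum>b\<in>GG I d. sum b I) + (\<Sum>b\<in>GG I d. d - sum b I) = (\<Sum>b\<in>GG I d. d)"
    unfolding sum.distrib[symmetric] using le by (intro sum.cong) auto
  also have "\<dots> = d * ((?n + d) choose d)" using cd by simp
  finally have eq: "(\<Sum>b\<in>GG I d. sum b I) + (\<Sum>k<d. card (GG I k)) = d * ((?n + d) choose d)"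
    unfolding GG_sum_aux[OF assms(1)] .
  show ?thesis
  proof (cases d)
    case 0
    then show ?thesis using assms by simp
  next
    case (Suc d')
    have "(\<Sum>k<d. card (GG I k)) = (\<Sum>k\<le>d'. (?n + k) choose k)"
      using GG_finite_card[OF assms(1)] Suc by (simp add: lessThan_Suc_atMost)
    also have "\<dots> = (?n + d) choose d'" using Suc by (simp add: sum_choose_lower)
    finally have "(\<Sum>b\<in>GG I d. sum b I) + ((?n + d) choose d') = Suc ?n * ((?n + d) choose d')"
      using eq binom_aux[of d' ?n] Suc by simp
    then show ?thesis using Suc by simp
  qed
qed

lemma mons_GG: "mons d = GG (UNIV :: 'n::finite set) d"
  unfolding mons_def GG_def by auto

lemma mons_finite: "finite (mons d :: ('n::finite \<Rightarrow> nat) set)"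
  using GG_finite_card[of "UNIV :: 'n set"] by (simp add: mons_GG)

lemma mons_card: "card (mons d :: ('n::finite \<Rightarrow> nat) set) = Nd CARD('n) (int d)"
  using GG_finite_card[of "UNIV :: 'n set"] by (simp add: mons_GG Nd_def)

lemma mons_sum: "(\<Sum>b\<in>(mons d :: ('n::finite \<Rightarrow> nat) set). sum b UNIV) = CARD('n) * Nd (CARD('n)+1) (int d - 1)"
proof (cases d)
  case 0
  then show ?thesis by (simp add: mons_def Nd_def)
next
  case (Suc d')
  then have "Nd (CARD('n)+1) (int d - 1) = (CARD('n) + d) choose (d - 1)"
    by (simp add: Nd_def)
  then show ?thesis using GG_sum[of "UNIV :: 'n set" d] Suc by (simp add: mons_GG)
qed

lemma NN_card: "card (mons d :: ('n::finite \<Rightarrow> nat) set) = Suc (NN TYPE('n) d)"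
proof -
  have "(\<lambda>_. 0) \<in> (mons d :: ('n \<Rightarrow> nat) set)" by (simp add: mons_def)
  then have "card (mons d :: ('n \<Rightarrow> nat) set) > 0" using mons_finite card_gt_0_iff by blast
  then show ?thesis by (simp add: NN_def mons_card)
qed

lemma tendsto_fun_iff:
  fixes f :: "'a \<Rightarrow> 'b \<Rightarrow> 'c::topological_space"
  shows "(f \<longlongrightarrow> l) F \<longleftrightarrow> (\<forall>i. ((\<lambda>k. f k i) \<longlongrightarrow> l i) F)"
proof -
  have "(f \<longlongrightarrow> l) F \<longleftrightarrow> limitin (product_topology (\<lambda>i. euclidean) UNIV) f l F"
    by (simp add: euclidean_product_topology)
  also have "\<dots> \<longleftrightarrow> (\<forall>i. ((\<lambda>k. f k i) \<longlongrightarrow> l i) F)"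
    by (subst limitin_componentwise) auto
  finally show ?thesis .
qed

lemma closed_Pdual: "closed (Pdual d :: (('n::finite \<Rightarrow> nat) \<Rightarrow> real) set)"
proof -
  have "Pdual d = (\<Inter>j\<in>-mons d. {xi :: ('n \<Rightarrow> nat) \<Rightarrow> real. xi j = 0})"
    unfolding Pdual_def by auto
  moreover have "closed {xi :: ('n \<Rightarrow> nat) \<Rightarrow> real. xi j = 0}" for j
    by (rule closed_Collect_eq) (auto intro: continuous_on_product_coordinates continuous_on_const)
  ultimately show ?thesis by auto
qed

lemma shift_eval_scale: "shift_eval d (\<lambda>j. c * xi j) a al = c * shift_eval d xi a al"
  unfolding shift_eval_def by (simp add: sum_distrib_left mult.left_commute)

definition good :: "(real^'n) set \<Rightarrow> nat \<Rightarrow> (real^'n \<Rightarrow> (('n::finite \<Rightarrow> nat) \<Rightarrow> real) set) \<Rightarrow> bool" where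
  "good X d E \<longleftrightarrow> (\<forall>a. a \<notin> X \<longrightarrow> E a = {}) \<and> (\<forall>a xi c. xi \<in> E a \<longrightarrow> (\<lambda>j. c * xi j) \<in> E a)
     \<and> (\<forall>a. E a \<subseteq> Pdual d)"

lemma good_E0: "good X d (E0 X d)"
  unfolding good_def E0_def Pdual_def delta_def
  apply auto
  apply (rule_tac x="c*t" in exI)
  apply (simp add: mult.assoc)
  done

lemma lspan_scale: "xi \<in> lspan S \<Longrightarrow> (\<lambda>j. c * xi j) \<in> lspan S"
proof -
  assume "xi \<in> lspan S"
  then obtain F cc where F: "finite F" "F \<subseteq> S" and xi: "xi = (\<lambda>j. \<Sum>v\<in>F. cc v * v j)"
    unfolding lspan_def by auto
  have "(\<lambda>j. c * xi j) = (\<lambda>j. \<Sum>v\<in>F. (c * cc v) * v j)"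
    unfolding xi by (simp add: sum_distrib_left mult.assoc)
  then show ?thesis using F unfolding lspan_def
    by (intro CollectI exI[of _ F] exI[of _ "\<lambda>v. c * cc v"]) auto
qed

lemma lspan_single: "v \<in> S \<Longrightarrow> (\<lambda>j. c * v j) \<in> lspan S"
  unfolding lspan_def by (rule CollectI, rule exI[of _ "{v}"], rule exI[of _ "\<lambda>_. c"]) auto

lemma lspan_Pdual: "S \<subseteq> Pdual d \<Longrightarrow> lspan S \<subseteq> Pdual d"
  unfolding lspan_def Pdual_def by (auto intro!: sum.neutral)

lemma DeltaE_Pdual:
  fixes E :: "real^'n::finite \<Rightarrow> (('n \<Rightarrow> nat) \<Rightarrow> real) set"
  assumes "\<forall>a. E a \<subseteq> Pdual d"
  shows "DeltaE X d E \<subseteq> UNIV \<times> Pdual d"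
proof
  fix z assume "z \<in> DeltaE X d E"
  then obtain p xi xis where z: "z = (p, xi)" and xis: "\<forall>i\<le>NN TYPE('n) d. xis i \<in> E (p i)"
    and xi: "xi = (\<lambda>j. \<Sum>i\<le>NN TYPE('n) d. xis i j)"
    unfolding DeltaE_def by blast
  have "xi \<in> Pdual d"
    unfolding Pdual_def xi using xis assms unfolding Pdual_def by (auto intro!: sum.neutral)
  then show "z \<in> UNIV \<times> Pdual d" using z by simp
qed

lemma good_Estep:
  assumes "good X d E"
  shows "good X d (Estep X d E)"
proof -
  have "closure (DeltaE X d E) \<subseteq> UNIV \<times> Pdual d"
    using DeltaE_Pdual[of E d X] assms unfolding good_def
    by (intro closure_minimal) (auto intro: closed_Times closed_Pdual)
  then have "Eprime X d E a \<subseteq> Pdual d" for a unfolding Eprime_def by auto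
  then have "lspan (Eprime X d E a) \<subseteq> Pdual d" for a by (rule lspan_Pdual)
  then show ?thesis unfolding good_def Estep_def
    by (auto intro: lspan_scale)
qed

lemma Ek_Suc: "Ek X d (Suc k) = Estep X d (Ek X d k)"
  unfolding Ek_def by simp

lemma good_Ek: "good X d (Ek X d k)"
  by (induction k) (auto simp: Ek_Suc good_Estep good_E0 Ek_def)

lemma good_mono:
  fixes E :: "real^'n::finite \<Rightarrow> (('n \<Rightarrow> nat) \<Rightarrow> real) set"
  assumes g: "good X d E"
  shows "E a \<subseteq> Estep X d E a"
proof
  fix xi assume xi: "xi \<in> E a"
  then have aX: "a \<in> X" using g unfolding good_def by auto
  define M where "M = (\<Sum>al\<in>mons d. \<bar>shift_eval d xi a al\<bar>) + 1"
  have M: "M > 0" unfolding M_def by (auto intro: add_nonneg_pos sum_nonneg)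
  define t where "t = 1 / M"
  have t: "t > 0" using M unfolding t_def by simp
  have sb: "\<bar>shift_eval d xi a al\<bar> \<le> M" if "al \<in> mons d" for al
  proof -
    have "\<bar>shift_eval d xi a al\<bar> \<le> (\<Sum>al\<in>mons d. \<bar>shift_eval d xi a al\<bar>)"
      using that mons_finite by (intro member_le_sum) auto
    then show ?thesis unfolding M_def by simp
  qed
  define xis where "xis = (\<lambda>(i::nat) j. (if i = 0 then t else 0) * xi j)"
  have "(diag d a, (\<lambda>j. t * xi j)) \<in> DeltaE X d E"
    unfolding DeltaE_def
  proof (clarify, intro conjI exI[of _ xis])
    show "\<forall>i>NN TYPE('n) d. diag d a i = 0" by (simp add: diag_def)
    show "(\<lambda>j. t * xi j) = (\<lambda>j. \<Sum>i\<le>NN TYPE('n) d. xis i j)"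
      unfolding xis_def by (simp add: sum_distrib_right[symmetric])
    show "\<forall>i\<le>NN TYPE('n) d. diag d a i \<in> X \<and> xis i \<in> E (diag d a i) \<and>
        (\<forall>alpha\<in>mons d. norm (diag d a i - diag d a 0) ^ (d - sum alpha UNIV) *
             \<bar>shift_eval d (xis i) (diag d a i) alpha\<bar> \<le> 1)"
    proof (intro allI impI conjI ballI)
      fix i assume i: "i \<le> NN TYPE('n) d"
      show "diag d a i \<in> X" using i aX by (simp add: diag_def)
      show "xis i \<in> E (diag d a i)" using i xi g unfolding good_def xis_def diag_def by auto
      fix al :: "'n \<Rightarrow> nat" assume al: "al \<in> mons d"
      have n1: "norm (diag d a i - diag d a 0) ^ (d - sum al UNIV) \<le> 1"
        using i by (simp add: diag_def power_0_left)
      have s1: "\<bar>shift_eval d (xis i) (diag d a i) al\<bar> \<le> 1"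
      proof (cases "i = 0")
        case True
        have "\<bar>shift_eval d (xis i) (diag d a i) al\<bar> = t * \<bar>shift_eval d xi a al\<bar>"
          using True t by (simp add: xis_def diag_def shift_eval_scale abs_mult)
        also have "\<dots> \<le> t * M" using sb[OF al] t by (intro mult_left_mono) auto
        also have "\<dots> = 1" using M unfolding t_def by simp
        finally show ?thesis .
      next
        case False
        then show ?thesis by (simp add: xis_def shift_eval_def)
      qed
      show "norm (diag d a i - diag d a 0) ^ (d - sum al UNIV) *
             \<bar>shift_eval d (xis i) (diag d a i) al\<bar> \<le> 1"
        using mult_mono[OF n1 s1] by simp
    qed
  qed
  then have "(\<lambda>j. t * xi j) \<in> Eprime X d E a"
    unfolding Eprime_def using aX closure_subset by blast
  then have "(\<lambda>j. (1/t) * (t * xi j)) \<in> Estep X d E a"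
    unfolding Estep_def using aX lspan_single[of "\<lambda>j. t * xi j" _ "1/t"] by simp
  then show "xi \<in> Estep X d E a" using t by simp
qed

lemma Ek_mono: "k \<le> k' \<Longrightarrow> Ek X d k a \<subseteq> Ek X d k' a"
proof (induction k' rule: dec_induct)
  case base then show ?case by simp
next
  case (step m)
  then show ?case using good_mono[OF good_Ek[of X d m], of a] by (simp add: Ek_Suc)
qed

lemma PiE_box_mons:
  assumes al: "al \<in> (mons d :: ('n::finite \<Rightarrow> nat) set)"
  shows "PiE UNIV (\<lambda>x. {..al x}) = {b \<in> mons d. \<forall>x. b x \<le> al x}"
proof -
  have "sum b UNIV \<le> d" if "\<forall>x. b x \<le> al x" for b :: "'n \<Rightarrow> nat"
  proof -
    have "sum b UNIV \<le> sum al UNIV" using that by (intro sum_mono) auto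
    then show ?thesis using al unfolding mons_def by simp
  qed
  then show ?thesis by (auto simp: PiE_UNIV_domain mons_def)
qed

lemma multi_binom:
  fixes u v :: "'n::finite \<Rightarrow> real"
  assumes al: "al \<in> mons d"
  shows "(\<Prod>x\<in>UNIV. (u x + v x) ^ al x) =
    (\<Sum>b\<in>mons d. (if \<forall>x. b x \<le> al x then
        (\<Prod>x\<in>UNIV. of_nat (al x choose b x) * u x ^ b x * v x ^ (al x - b x)) else 0))"
proof -
  have "(\<Prod>x\<in>UNIV. (u x + v x) ^ al x) =
      (\<Prod>x\<in>UNIV. \<Sum>k\<in>{..al x}. of_nat (al x choose k) * u x ^ k * v x ^ (al x - k))"
    by (simp add: binomial_ring)
  also have "\<dots> = (\<Sum>b\<in>PiE UNIV (\<lambda>x. {..al x}).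
      \<Prod>x\<in>UNIV. of_nat (al x choose b x) * u x ^ b x * v x ^ (al x - b x))"
    by (rule prod_sum_PiE) auto
  also have "\<dots> = (\<Sum>b\<in>{b \<in> mons d. \<forall>x. b x \<le> al x}.
      \<Prod>x\<in>UNIV. of_nat (al x choose b x) * u x ^ b x * v x ^ (al x - b x))"
    by (simp add: PiE_box_mons[OF al])
  also have "\<dots> = (\<Sum>b\<in>mons d. (if \<forall>x. b x \<le> al x then
        (\<Prod>x\<in>UNIV. of_nat (al x choose b x) * u x ^ b x * v x ^ (al x - b x)) else 0))"
    by (rule sum.inter_filter[OF mons_finite])
  finally show ?thesis .
qed

lemma shift_delta:
  fixes a :: "real^'n::finite"
  assumes al: "al \<in> mons d"
  shows "shift_eval d (\<lambda>j. t * delta d a j) a al = (if al = (\<lambda>_. 0) then t else 0)"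
proof -
  have "shift_eval d (\<lambda>j. t * delta d a j) a al =
     t * (\<Sum>b\<in>mons d. (if \<forall>x. b x \<le> al x then
        (\<Prod>x\<in>UNIV. of_nat (al x choose b x) * (a$x) ^ b x * (- (a$x)) ^ (al x - b x)) else 0))"
    unfolding shift_eval_def sum_distrib_left
  proof (rule sum.cong[OF refl])
    fix b :: "'n \<Rightarrow> nat" assume b: "b \<in> mons d"
    show "(if \<forall>i. b i \<le> al i then \<Prod>i\<in>UNIV. of_nat (al i choose b i) * (- (a$i)) ^ (al i - b i) else 0) *
          (t * delta d a b) =
         t * (if \<forall>x. b x \<le> al x then \<Prod>x\<in>UNIV. of_nat (al x choose b x) * (a$x) ^ b x * (- (a$x)) ^ (al x - b x) else 0)"
      using b by (simp add: delta_def monom_def prod.distrib mult_ac)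
  qed
  also have "\<dots> = t * (\<Prod>x\<in>UNIV. ((a$x) + (- (a$x))) ^ al x)"
    using multi_binom[OF al, of "\<lambda>x. a$x" "\<lambda>x. - (a$x)"] by simp
  also have "\<dots> = (if al = (\<lambda>_. 0) then t else 0)"
    by (auto simp: power_0_left fun_eq_iff)
  finally show ?thesis .
qed

lemma det_bound:
  fixes A :: "real mat"
  assumes A: "A \<in> carrier_mat n n" and B: "\<And>i j. i < n \<Longrightarrow> j < n \<Longrightarrow> \<bar>A $$ (i,j)\<bar> \<le> B"
    and B0: "B \<ge> 0"
  shows "\<bar>det A\<bar> \<le> fact n * B ^ n"
proof -
  have "\<bar>det A\<bar> = \<bar>\<Sum>p\<in>{p. p permutes {0..<n}}. signof p * (\<Prod>i = 0..<n. A $$ (i, p i))\<bar>"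
    by (simp add: det_def'[OF A])
  also have "\<dots> \<le> (\<Sum>p\<in>{p. p permutes {0..<n}}. \<bar>signof p * (\<Prod>i = 0..<n. A $$ (i, p i))\<bar>)"
    by (rule sum_abs)
  also have "\<dots> \<le> (\<Sum>p\<in>{p. p permutes {0..<n}}. B ^ n)"
  proof (rule sum_mono)
    fix p assume p: "p \<in> {p. p permutes {0..<n}}"
    have "\<bar>signof p * (\<Prod>i = 0..<n. A $$ (i, p i))\<bar> = (\<Prod>i = 0..<n. \<bar>A $$ (i, p i)\<bar>)"
    proof -
      have s1: "\<bar>signof p :: real\<bar> = 1" by (simp add: sign_def)
      show ?thesis by (simp only: abs_mult abs_prod s1 mult_1)
    qed
    also have "\<dots> \<le> (\<Prod>i = 0..<n. B)"
    proof (rule prod_mono)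
      fix i assume i: "i \<in> {0..<n}"
      then have "p i \<in> {0..<n}" using p by (simp add: permutes_in_image)
      then show "0 \<le> \<bar>A $$ (i, p i)\<bar> \<and> \<bar>A $$ (i, p i)\<bar> \<le> B" using i B[of i "p i"] by simp
    qed
    finally show "\<bar>signof p * (\<Prod>i = 0..<n. A $$ (i, p i))\<bar> \<le> B ^ n" by simp
  qed
  also have "\<dots> = fact n * B ^ n"
    by (simp add: card_permutations)
  finally show ?thesis .
qed

lemma adj_bound:
  fixes A :: "real mat"
  assumes A: "A \<in> carrier_mat n n" and B: "\<And>i j. i < n \<Longrightarrow> j < n \<Longrightarrow> \<bar>A $$ (i,j)\<bar> \<le> B"
    and B1: "B \<ge> 1" and ij: "i < n" "j < n"
  shows "\<bar>adj_mat A $$ (i,j)\<bar> \<le> fact n * B ^ n"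
proof -
  have "adj_mat A $$ (i,j) = cofactor A j i" using A ij by (simp add: adj_mat_def)
  then have "\<bar>adj_mat A $$ (i,j)\<bar> = \<bar>det (mat_delete A j i)\<bar>"
    by (simp add: cofactor_def abs_mult)
  also have "\<dots> \<le> fact (n - 1) * B ^ (n - 1)"
  proof (rule det_bound)
    show "mat_delete A j i \<in> carrier_mat (n - 1) (n - 1)" using mat_delete_carrier[OF A] .
    fix i' j' assume "i' < n - 1" "j' < n - 1"
    then show "\<bar>mat_delete A j i $$ (i', j')\<bar> \<le> B"
      using A by (auto simp: mat_delete_def intro!: B)
  qed (use B1 in auto)
  also have "\<dots> \<le> fact n * B ^ n"
  proof (rule mult_mono)
    show "(fact (n - 1) :: real) \<le> fact n" by (rule fact_mono) auto
    show "B ^ (n - 1) \<le> B ^ n" using B1 by (intro power_increasing) auto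
  qed (use B1 in auto)
  finally show ?thesis .
qed

lemma mv_bound:
  fixes A :: "real mat" and v :: "real Matrix.vec"
  assumes A: "A \<in> carrier_mat n n" and v: "v \<in> carrier_vec n"
    and B: "\<And>i j. i < n \<Longrightarrow> j < n \<Longrightarrow> \<bar>A $$ (i,j)\<bar> \<le> B"
    and V: "\<And>j. j < n \<Longrightarrow> \<bar>v $ j\<bar> \<le> V" and i: "i < n" and B0: "B \<ge> 0"
  shows "\<bar>(A *\<^sub>v v) $ i\<bar> \<le> n * B * V"
proof -
  have "(A *\<^sub>v v) $ i = (\<Sum>j = 0..<n. A $$ (i,j) * v $ j)"
    using A v i by (simp add: scalar_prod_def)
  then have "\<bar>(A *\<^sub>v v) $ i\<bar> \<le> (\<Sum>j = 0..<n. \<bar>A $$ (i,j)\<bar> * \<bar>v $ j\<bar>)"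
    by (simp add: abs_mult[symmetric] sum_abs)
  also have "\<dots> \<le> (\<Sum>j = 0..<n. B * V)"
    using B V i B0 by (intro sum_mono mult_mono) auto
  also have "\<dots> = n * B * V" by simp
  finally show ?thesis .
qed

lemma smult_mat_mult_vec:
  fixes A :: "'a::comm_ring_1 mat" and v :: "'a Matrix.vec"
  assumes A: "A \<in> carrier_mat n m" and v: "v \<in> carrier_vec m"
  shows "(k \<cdot>\<^sub>m A) *\<^sub>v v = k \<cdot>\<^sub>v (A *\<^sub>v v)"
  using A v by (intro eq_vecI) (auto simp: scalar_prod_def sum_distrib_left mult.assoc)

definition tt :: "real^'n::finite \<Rightarrow> ('n \<Rightarrow> nat) \<Rightarrow> ('n \<Rightarrow> nat) \<Rightarrow> real" where
  "tt a0 b j = (if \<forall>x. b x \<le> j x then \<Prod>x\<in>UNIV. of_nat (j x choose b x) * (a0$x) ^ (j x - b x) else 0)"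

lemma monom_expand:
  fixes a0 bv :: "real^'n::finite"
  assumes j: "j \<in> mons d"
  shows "Defs.monom (a0 + r *\<^sub>R bv) j = (\<Sum>b\<in>mons d. tt a0 b j * (r ^ sum b UNIV * Defs.monom bv b))"
proof -
  have "Defs.monom (a0 + r *\<^sub>R bv) j = (\<Prod>x\<in>UNIV. (r * bv$x + a0$x) ^ j x)"
    unfolding monom_def by (simp add: add.commute)
  also have "\<dots> = (\<Sum>b\<in>mons d. (if \<forall>x. b x \<le> j x then
        (\<Prod>x\<in>UNIV. of_nat (j x choose b x) * (r * bv$x) ^ b x * (a0$x) ^ (j x - b x)) else 0))"
    by (rule multi_binom[OF j])
  also have "\<dots> = (\<Sum>b\<in>mons d. tt a0 b j * (r ^ sum b UNIV * Defs.monom bv b))"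
  proof (rule sum.cong[OF refl])
    fix b :: "'n \<Rightarrow> nat"
    have "(\<Prod>x\<in>UNIV. of_nat (j x choose b x) * (r * bv$x) ^ b x * (a0$x) ^ (j x - b x)) =
        (\<Prod>x\<in>UNIV. of_nat (j x choose b x) * (a0$x) ^ (j x - b x)) * ((\<Prod>x\<in>UNIV. r ^ b x) * (\<Prod>x\<in>UNIV. (bv$x) ^ b x))"
      by (simp add: prod.distrib[symmetric] power_mult_distrib mult_ac)
    also have "\<dots> = (\<Prod>x\<in>UNIV. of_nat (j x choose b x) * (a0$x) ^ (j x - b x)) * (r ^ sum b UNIV * Defs.monom bv b)"
      by (simp add: power_sum monom_def)
    finally show "(if \<forall>x. b x \<le> j x then
        (\<Prod>x\<in>UNIV. of_nat (j x choose b x) * (r * bv$x) ^ b x * (a0$x) ^ (j x - b x)) else 0) =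
        tt a0 b j * (r ^ sum b UNIV * Defs.monom bv b)"
      by (simp add: tt_def)
  qed
  finally show ?thesis .
qed

lemma tt_diag: "tt a0 b b = 1"
  by (simp add: tt_def)

lemma perm_order_id:
  fixes e :: "nat \<Rightarrow> ('n::finite \<Rightarrow> nat)"
  assumes p: "p permutes S" and S: "finite S" and inj: "inj_on e S"
    and le: "\<And>l. l \<in> S \<Longrightarrow> \<forall>x. e (p l) x \<le> e l x"
  shows "p = id"
proof -
  have s: "(\<Sum>l\<in>S. sum (e (p l)) UNIV) = (\<Sum>l\<in>S. sum (e l) UNIV)"
    using sum.permute[OF p, of "\<lambda>l. sum (e l) UNIV"] by (simp add: comp_def)
  have "p l = l" if l: "l \<in> S" for l
  proof -
    have "sum (e (p l)) UNIV = sum (e l) UNIV"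
      using sum_mono_inv[OF s _ l S] le by (simp add: sum_mono)
    then have "e (p l) x = e l x" for x
      using sum_mono_inv[of "e (p l)" UNIV "e l" x] le[OF l] by simp
    then have "e (p l) = e l" by auto
    moreover have "p l \<in> S" using p l by (simp add: permutes_in_image)
    ultimately show ?thesis using inj l by (auto dest: inj_onD)
  qed
  moreover have "p l = l" if "l \<notin> S" for l using p that by (simp add: permutes_not_in)
  ultimately have "p l = l" for l by blast
  then show ?thesis by (auto simp: fun_eq_iff)
qed

lemma det_diag_like:
  fixes A :: "real mat"
  assumes A: "A \<in> carrier_mat n n"
    and z: "\<And>p. p permutes {0..<n} \<Longrightarrow> p \<noteq> id \<Longrightarrow> (\<Prod>i = 0..<n. A $$ (i, p i)) = 0"
  shows "det A = (\<Prod>i = 0..<n. A $$ (i, i))"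
proof -
  let ?P = "{p. p permutes {0..<n}}"
  have fin: "finite ?P" by (simp add: finite_permutations)
  have idP: "id \<in> ?P" by (simp add: permutes_id)
  have "det A = (\<Sum>p\<in>?P. signof p * (\<Prod>i = 0..<n. A $$ (i, p i)))"
    by (rule det_def'[OF A])
  also have "\<dots> = signof id * (\<Prod>i = 0..<n. A $$ (i, id i)) +
      (\<Sum>p\<in>?P - {id}. signof p * (\<Prod>i = 0..<n. A $$ (i, p i)))"
    by (subst sum.remove[OF fin idP]) simp
  also have "(\<Sum>p\<in>?P - {id}. signof p * (\<Prod>i = 0..<n. A $$ (i, p i))) = (0::real)"
    using z by (intro sum.neutral) auto
  finally show ?thesis by (simp add: sign_id)
qed

lemma core_k:
  fixes pts :: "nat \<Rightarrow> real^'n::finite" and r c KT Ke :: real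
    and eta :: "('n \<Rightarrow> nat) \<Rightarrow> real" and e :: "nat \<Rightarrow> ('n \<Rightarrow> nat)"
  assumes r: "0 < r" "r \<le> 1"
    and e: "bij_betw e {..NN TYPE('n) d} (mons d)"
    and ballk: "\<And>i. i \<le> NN TYPE('n) d \<Longrightarrow> norm (pts i - pts 0) \<le> r"
    and det: "c * r ^ (\<Sum>b\<in>(mons d :: ('n \<Rightarrow> nat) set). sum b UNIV) \<le> \<bar>ldet (NN TYPE('n) d) (\<lambda>i l. Defs.monom (pts i) (e l))\<bar>"
    and c: "c > 0"
    and KT: "\<And>b j. b \<in> mons d \<Longrightarrow> j \<in> mons d \<Longrightarrow> \<bar>tt (pts 0) b j\<bar> \<le> KT" and KT1: "KT \<ge> 1"
    and Ke: "\<And>j. j \<in> mons d \<Longrightarrow> \<bar>eta j\<bar> \<le> Ke"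
  shows "\<exists>lam. (\<forall>j\<in>mons d. (\<Sum>i\<le>NN TYPE('n) d. lam i * Defs.monom (pts i) j) = eta j) \<and>
              (\<forall>i\<le>NN TYPE('n) d. \<bar>lam i\<bar> * r ^ d \<le>
                 (1/c) * (real (Suc (NN TYPE('n) d)) * fact (Suc (NN TYPE('n) d))) *
                 (real (Suc (NN TYPE('n) d)) * (fact (Suc (NN TYPE('n) d)) * KT ^ Suc (NN TYPE('n) d)) * Ke))"
proof -
  define N where "N = NN TYPE('n) d"
  define n1 where "n1 = Suc N"
  have rng: "{0..<n1} = {..N}" unfolding n1_def by auto
  have e': "bij_betw e {0..<n1} (mons d)" using e rng N_def by simp
  have em: "e l \<in> mons d" if "l < n1" for l using e' that by (auto dest: bij_betwE)
  have inj: "inj_on e {0..<n1}" using e' bij_betw_imp_inj_on by blast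
  define S where "S = (\<Sum>b\<in>(mons d :: ('n \<Rightarrow> nat) set). sum b UNIV)"
  define a0 where "a0 = pts 0"
  define bv where "bv i = (1/r) *\<^sub>R (pts i - a0)" for i
  have pts_eq: "pts i = a0 + r *\<^sub>R bv i" for i using r by (simp add: bv_def)
  have bvle: "\<bar>bv i $ x\<bar> \<le> 1" if "i < n1" for i x
  proof -
    have "\<bar>bv i $ x\<bar> \<le> norm (bv i)" by (rule component_le_norm_cart)
    also have "\<dots> = (1/r) * norm (pts i - a0)" using r by (simp add: bv_def)
    also have "\<dots> \<le> (1/r) * r" using ballk[of i] that r unfolding a0_def n1_def N_def
      by (intro mult_left_mono) auto
    finally show ?thesis using r by simp
  qed
  define Vt where "Vt = mat n1 n1 (\<lambda>(l,i). Defs.monom (pts i) (e l))"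
  define Tt where "Tt = mat n1 n1 (\<lambda>(l,m). tt a0 (e m) (e l))"
  define Dm where "Dm = mat n1 n1 (\<lambda>(m,m'). if m = m' then r ^ sum (e m) UNIV else (0::real))"
  define Wt where "Wt = mat n1 n1 (\<lambda>(m,i). Defs.monom (bv i) (e m))"
  have cV: "Vt \<in> carrier_mat n1 n1" and cT: "Tt \<in> carrier_mat n1 n1"
    and cD: "Dm \<in> carrier_mat n1 n1" and cW: "Wt \<in> carrier_mat n1 n1"
    by (auto simp: Vt_def Tt_def Dm_def Wt_def)
  have DW: "Dm * Wt = mat n1 n1 (\<lambda>(m,i). r ^ sum (e m) UNIV * Defs.monom (bv i) (e m))"
  proof (rule eq_matI)
    fix m i assume mi: "m < dim_row (mat n1 n1 (\<lambda>(m,i). r ^ sum (e m) UNIV * Defs.monom (bv i) (e m)))"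
      "i < dim_col (mat n1 n1 (\<lambda>(m,i). r ^ sum (e m) UNIV * Defs.monom (bv i) (e m)))"
    then have mi': "m < n1" "i < n1" by auto
    have "(Dm * Wt) $$ (m, i) = (\<Sum>k = 0..<n1. (if m = k then r ^ sum (e m) UNIV else 0) * Defs.monom (bv i) (e k))"
      using mi' by (simp add: Dm_def Wt_def scalar_prod_def)
    also have "\<dots> = (\<Sum>k = 0..<n1. (if m = k then r ^ sum (e m) UNIV * Defs.monom (bv i) (e k) else 0))"
      by (intro sum.cong) auto
    also have "\<dots> = r ^ sum (e m) UNIV * Defs.monom (bv i) (e m)"
      using mi' by (simp add: sum.delta)
    finally show "(Dm * Wt) $$ (m, i) = mat n1 n1 (\<lambda>(m,i). r ^ sum (e m) UNIV * Defs.monom (bv i) (e m)) $$ (m, i)"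
      using mi' by simp
  qed (auto simp: Dm_def Wt_def)
  have VTDW: "Vt = Tt * (Dm * Wt)"
  proof (rule eq_matI)
    fix l i assume "l < dim_row (Tt * (Dm * Wt))" "i < dim_col (Tt * (Dm * Wt))"
    then have li: "l < n1" "i < n1" using cT cD cW by auto
    have "(Tt * (Dm * Wt)) $$ (l, i) = (\<Sum>m = 0..<n1. tt a0 (e m) (e l) * (r ^ sum (e m) UNIV * Defs.monom (bv i) (e m)))"
      using li by (simp add: DW Tt_def scalar_prod_def)
    also have "\<dots> = (\<Sum>b\<in>mons d. tt a0 b (e l) * (r ^ sum b UNIV * Defs.monom (bv i) b))"
      by (rule sum.reindex_bij_betw[OF e'])
    also have "\<dots> = Defs.monom (pts i) (e l)"
      unfolding pts_eq by (rule monom_expand[symmetric, OF em[OF li(1)]])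
    finally show "Vt $$ (l, i) = (Tt * (Dm * Wt)) $$ (l, i)" using li by (simp add: Vt_def)
  qed (use cT cD cW in \<open>auto simp: Vt_def\<close>)
  have detT: "det Tt = 1"
  proof -
    have "det Tt = (\<Prod>i = 0..<n1. Tt $$ (i, i))"
    proof (rule det_diag_like[OF cT])
      fix p assume p: "p permutes {0..<n1}" and pid: "p \<noteq> id"
      show "(\<Prod>i = 0..<n1. Tt $$ (i, p i)) = 0"
      proof (rule ccontr)
        assume nz: "(\<Prod>i = 0..<n1. Tt $$ (i, p i)) \<noteq> 0"
        have "\<forall>x. e (p l) x \<le> e l x" if l: "l \<in> {0..<n1}" for l
        proof -
          have "p l \<in> {0..<n1}" using p l by (simp add: permutes_in_image)
          moreover have "Tt $$ (l, p l) \<noteq> 0" using nz l by auto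
          ultimately show ?thesis using l by (auto simp: Tt_def tt_def split: if_splits)
        qed
        then have "p = id" using perm_order_id[OF p _ inj] by auto
        then show False using pid by simp
      qed
    qed
    also have "\<dots> = 1" by (simp add: Tt_def tt_diag)
    finally show ?thesis .
  qed
  have detD: "det Dm = r ^ S"
  proof -
    have "det Dm = (\<Prod>i = 0..<n1. Dm $$ (i, i))"
    proof (rule det_diag_like[OF cD])
      fix p assume p: "p permutes {0..<n1}" and pid: "p \<noteq> id"
      then obtain l where l: "p l \<noteq> l" by (auto simp: fun_eq_iff)
      then have l1: "l \<in> {0..<n1}" using p by (meson permutes_not_in)
      then have "p l \<in> {0..<n1}" using p by (simp add: permutes_in_image)
      then have "Dm $$ (l, p l) = 0" using l l1 by (simp add: Dm_def)
      then show "(\<Prod>i = 0..<n1. Dm $$ (i, p i)) = 0" using l1 by (auto intro: prod_zero)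
    qed
    also have "\<dots> = (\<Prod>i = 0..<n1. r ^ sum (e i) UNIV)" by (simp add: Dm_def)
    also have "\<dots> = r ^ (\<Sum>i = 0..<n1. sum (e i) UNIV)" by (simp add: power_sum)
    also have "(\<Sum>i = 0..<n1. sum (e i) UNIV) = S" unfolding S_def
      using sum.reindex_bij_betw[OF e', of "\<lambda>b. sum b UNIV"] by simp
    finally show ?thesis .
  qed
  have detV: "det Vt = r ^ S * det Wt"
    using VTDW det_mult[OF cT mult_carrier_mat[OF cD cW]] det_mult[OF cD cW] detT detD by simp
  have ldetV: "ldet N (\<lambda>i l. Defs.monom (pts i) (e l)) = det Vt"
  proof -
    have "det Vt = (\<Sum>p\<in>{p. p permutes {0..<n1}}. signof p * (\<Prod>i = 0..<n1. Vt $$ (p i, i)))"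
      using mat_det_left_def[OF cV] cV by simp
    also have "\<dots> = (\<Sum>p\<in>{p. p permutes {..N}}. signof p * (\<Prod>i\<in>{..N}. Defs.monom (pts i) (e (p i))))"
    proof (rule sum.cong)
      show "{p. p permutes {0..<n1}} = {p. p permutes {..N}}" using rng by simp
      fix p assume p: "p \<in> {p. p permutes {..N}}"
      have "Vt $$ (p i, i) = Defs.monom (pts i) (e (p i))" if "i \<in> {..N}" for i
      proof -
        have pp: "p permutes {..N}" using p by simp
        have "p i \<in> {..N} \<longleftrightarrow> i \<in> {..N}" by (rule permutes_in_image[OF pp])
        then have "p i \<in> {..N}" using that by blast
        then show ?thesis using that unfolding Vt_def n1_def by simp
      qed
      then show "signof p * (\<Prod>i = 0..<n1. Vt $$ (p i, i)) = signof p * (\<Prod>i\<in>{..N}. Defs.monom (pts i) (e (p i)))"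
        unfolding rng by simp
    qed
    finally show ?thesis unfolding ldet_def by simp
  qed
  have Spos: "r ^ S > 0" using r by simp
  have detW: "\<bar>det Wt\<bar> \<ge> c"
  proof -
    have "c * r ^ S \<le> r ^ S * \<bar>det Wt\<bar>"
      using det ldetV detV Spos unfolding S_def N_def by (simp add: abs_mult)
    then show ?thesis using Spos by (simp add: mult.commute)
  qed
  have Wle: "\<bar>Wt $$ (m, i)\<bar> \<le> 1" if "m < n1" "i < n1" for m i
  proof -
    have "\<bar>Wt $$ (m, i)\<bar> = (\<Prod>x\<in>UNIV. \<bar>bv i $ x\<bar> ^ e m x)"
      using that by (simp add: Wt_def monom_def abs_prod power_abs)
    also have "\<dots> \<le> 1" using bvle[OF that(2)] by (intro prod_le_1) (auto intro: power_le_one)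
    finally show ?thesis .
  qed
  have Tle: "\<bar>Tt $$ (l, m)\<bar> \<le> KT" if "l < n1" "m < n1" for l m
    using that KT[OF em em] by (simp add: Tt_def a0_def)
  define ev where "ev = vec n1 (\<lambda>l. eta (e l))"
  have cev: "ev \<in> carrier_vec n1" by (simp add: ev_def)
  define AT where "AT = adj_mat Tt"
  define u where "u = AT *\<^sub>v ev"
  define U where "U = n1 * (fact n1 * KT ^ n1) * Ke"
  have cAT: "AT \<in> carrier_mat n1 n1" using adj_mat(1)[OF cT] by (simp add: AT_def)
  have cu: "u \<in> carrier_vec n1" unfolding u_def using cAT cev by (rule mult_mat_vec_carrier)
  have ule: "\<bar>u $ m\<bar> \<le> U" if "m < n1" for m
    unfolding u_def U_def
  proof (rule mv_bound[OF cAT cev _ _ that])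
    show "\<bar>AT $$ (i, j)\<bar> \<le> fact n1 * KT ^ n1" if "i < n1" "j < n1" for i j
      unfolding AT_def by (rule adj_bound[OF cT Tle KT1 that])
    show "\<bar>ev $ j\<bar> \<le> Ke" if "j < n1" for j using that Ke[OF em[OF that]] by (simp add: ev_def)
    show "0 \<le> fact n1 * KT ^ n1" using KT1 by simp
  qed
  define w where "w = vec n1 (\<lambda>m. (1/r) ^ sum (e m) UNIV * u $ m)"
  have cw: "w \<in> carrier_vec n1" by (simp add: w_def)
  have wle: "\<bar>w $ m\<bar> \<le> (1/r) ^ d * U" if "m < n1" for m
  proof -
    have "sum (e m) UNIV \<le> d" using em[OF that] by (simp add: mons_def)
    then have "(1/r) ^ sum (e m) UNIV \<le> (1/r) ^ d" using r by (intro power_increasing) auto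
    then have "\<bar>w $ m\<bar> \<le> (1/r) ^ d * \<bar>u $ m\<bar>" using that r
      by (simp add: w_def abs_mult mult_right_mono)
    also have "\<dots> \<le> (1/r) ^ d * U" using ule[OF that] r by (intro mult_left_mono) auto
    finally show ?thesis .
  qed
  have Dw: "Dm *\<^sub>v w = u"
  proof (rule eq_vecI)
    fix m assume "m < dim_vec u"
    then have m: "m < n1" using cu by simp
    have "(Dm *\<^sub>v w) $ m = (\<Sum>k = 0..<n1. (if m = k then r ^ sum (e m) UNIV else 0) * w $ k)"
      using m cw by (simp add: Dm_def scalar_prod_def)
    also have "\<dots> = (\<Sum>k = 0..<n1. (if m = k then r ^ sum (e m) UNIV * w $ k else 0))"
      by (intro sum.cong) auto
    also have "\<dots> = r ^ sum (e m) UNIV * w $ m" using m by (simp add: sum.delta)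
    also have "\<dots> = (r ^ sum (e m) UNIV * (1/r) ^ sum (e m) UNIV) * u $ m" using m
      by (simp add: w_def mult.assoc)
    also have "r ^ sum (e m) UNIV * (1/r) ^ sum (e m) UNIV = 1"
      using r by (simp add: power_mult_distrib[symmetric])
    also have "1 * u $ m = u $ m" by simp
    finally show "(Dm *\<^sub>v w) $ m = u $ m" .
  qed (use cD cu in auto)
  define AW where "AW = adj_mat Wt"
  have cAW: "AW \<in> carrier_mat n1 n1" using adj_mat(1)[OF cW] by (simp add: AW_def)
  define z where "z = AW *\<^sub>v w"
  have cz: "z \<in> carrier_vec n1" unfolding z_def using cAW cw by (rule mult_mat_vec_carrier)
  have zle: "\<bar>z $ i\<bar> \<le> real n1 * fact n1 * ((1/r) ^ d * U)" if "i < n1" for i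
  proof -
    have "\<bar>z $ i\<bar> \<le> real n1 * (fact n1 * (1::real) ^ n1) * ((1/r) ^ d * U)"
      unfolding z_def
    proof (rule mv_bound[OF cAW cw _ _ that])
      show "\<bar>AW $$ (i, j)\<bar> \<le> fact n1 * (1::real) ^ n1" if "i < n1" "j < n1" for i j
        unfolding AW_def by (rule adj_bound[OF cW Wle order_refl that])
      show "\<bar>w $ j\<bar> \<le> (1/r) ^ d * U" if "j < n1" for j using wle[OF that] .
    qed simp
    then show ?thesis by simp
  qed
  have dWnz: "det Wt \<noteq> 0" using detW c by auto
  define lv where "lv = (1 / det Wt) \<cdot>\<^sub>v z"
  have clv: "lv \<in> carrier_vec n1" using cz by (simp add: lv_def)
  have Wlv: "Wt *\<^sub>v lv = w"
  proof -
    have "Wt *\<^sub>v lv = (1 / det Wt) \<cdot>\<^sub>v (Wt *\<^sub>v z)"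
      unfolding lv_def by (rule mult_mat_vec[OF cW cz])
    also have "Wt *\<^sub>v z = (Wt * AW) *\<^sub>v w"
      unfolding z_def by (rule assoc_mult_mat_vec[OF cW cAW cw, symmetric])
    also have "Wt * AW = det Wt \<cdot>\<^sub>m 1\<^sub>m n1" unfolding AW_def by (rule adj_mat(2)[OF cW])
    also have "(det Wt \<cdot>\<^sub>m 1\<^sub>m n1) *\<^sub>v w = det Wt \<cdot>\<^sub>v w"
      using smult_mat_mult_vec[of "1\<^sub>m n1" n1 n1 w "det Wt"] cw by simp
    also have "(1 / det Wt) \<cdot>\<^sub>v (det Wt \<cdot>\<^sub>v w) = w"
      using dWnz by (simp add: smult_smult_assoc)
    finally show ?thesis .
  qed
  have Vlv: "Vt *\<^sub>v lv = ev"
  proof -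
    have "Vt *\<^sub>v lv = Tt *\<^sub>v ((Dm * Wt) *\<^sub>v lv)"
      unfolding VTDW by (rule assoc_mult_mat_vec[OF cT mult_carrier_mat[OF cD cW] clv])
    also have "(Dm * Wt) *\<^sub>v lv = Dm *\<^sub>v (Wt *\<^sub>v lv)"
      by (rule assoc_mult_mat_vec[OF cD cW clv])
    also have "Tt *\<^sub>v (Dm *\<^sub>v (Wt *\<^sub>v lv)) = Tt *\<^sub>v u" using Wlv Dw by simp
    also have "\<dots> = (Tt * AT) *\<^sub>v ev" unfolding u_def by (rule assoc_mult_mat_vec[OF cT cAT cev, symmetric])
    also have "Tt * AT = det Tt \<cdot>\<^sub>m 1\<^sub>m n1" unfolding AT_def by (rule adj_mat(2)[OF cT])
    also have "(det Tt \<cdot>\<^sub>m 1\<^sub>m n1) *\<^sub>v ev = ev"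
      using smult_mat_mult_vec[of "1\<^sub>m n1" n1 n1 ev "det Tt"] cev detT by simp
    finally show ?thesis .
  qed
  define lam where "lam i = lv $ i" for i
  show ?thesis
  proof (intro exI[of _ lam] conjI ballI allI impI)
    fix j :: "'n \<Rightarrow> nat" assume j: "j \<in> mons d"
    then have "j \<in> e ` {0..<n1}" using e' by (simp add: bij_betw_def)
    then obtain l where l: "l < n1" "e l = j" by auto
    have "(Vt *\<^sub>v lv) $ l = (\<Sum>i = 0..<n1. Defs.monom (pts i) (e l) * lv $ i)"
      using l clv by (simp add: Vt_def scalar_prod_def)
    then have "(\<Sum>i = 0..<n1. Defs.monom (pts i) (e l) * lv $ i) = eta (e l)"
      using Vlv l by (simp add: ev_def)
    then show "(\<Sum>i\<le>NN TYPE('n) d. lam i * Defs.monom (pts i) j) = eta j"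
      using l rng by (simp add: lam_def N_def mult.commute)
  next
    fix i assume i: "i \<le> NN TYPE('n) d"
    then have i1: "i < n1" unfolding n1_def N_def by simp
    have "\<bar>lam i\<bar> = \<bar>z $ i\<bar> / \<bar>det Wt\<bar>" using i1 cz by (simp add: lam_def lv_def abs_mult)
    also have "\<dots> \<le> \<bar>z $ i\<bar> / c" using detW c by (intro divide_left_mono) auto
    also have "\<dots> \<le> (real n1 * fact n1 * ((1/r) ^ d * U)) / c" using zle[OF i1] c by (intro divide_right_mono) auto
    finally have "\<bar>lam i\<bar> * r ^ d \<le> (real n1 * fact n1 * ((1/r) ^ d * U)) / c * r ^ d"
      using r by (intro mult_right_mono) auto
    also have "\<dots> = (1/c) * (real n1 * fact n1) * U * ((1/r) ^ d * r ^ d)" by (simp add: field_simps)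
    also have "(1/r) ^ d * r ^ d = 1" using r by (simp add: power_mult_distrib[symmetric])
    finally show "\<bar>lam i\<bar> * r ^ d \<le> (1/c) * (real (Suc (NN TYPE('n) d)) * fact (Suc (NN TYPE('n) d))) *
                 (real (Suc (NN TYPE('n) d)) * (fact (Suc (NN TYPE('n) d)) * KT ^ Suc (NN TYPE('n) d)) * Ke)"
      unfolding U_def n1_def N_def by simp
  qed
qed

lemma tt_bound:
  fixes a0 :: "real^'n::finite"
  assumes B: "norm a0 \<le> B" "B \<ge> 1" and j: "j \<in> mons d"
  shows "\<bar>tt a0 b j\<bar> \<le> (2 ^ d * B ^ d) ^ CARD('n)"
proof (cases "\<forall>x. b x \<le> j x")
  case True
  have "\<bar>tt a0 b j\<bar> = (\<Prod>x\<in>UNIV. of_nat (j x choose b x) * \<bar>a0$x\<bar> ^ (j x - b x))"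
    using True by (simp add: tt_def abs_prod abs_mult power_abs)
  also have "\<dots> \<le> (\<Prod>x\<in>(UNIV::'n set). 2 ^ d * B ^ d)"
  proof (rule prod_mono, rule conjI)
    fix x
    have jx: "j x \<le> d"
    proof -
      have "j x \<le> sum j UNIV" by (rule member_le_sum) auto
      then show ?thesis using j by (simp add: mons_def)
    qed
    have "real (j x choose b x) \<le> 2 ^ j x"
      using binomial_le_pow2[of "j x" "b x"] by (metis of_nat_le_iff of_nat_numeral of_nat_power)
    also have "(2::real) ^ j x \<le> 2 ^ d" using jx by (intro power_increasing) auto
    finally have c1: "real (j x choose b x) \<le> 2 ^ d" .
    have "\<bar>a0$x\<bar> \<le> B" using component_le_norm_cart[of a0 x] B by simp
    then have "\<bar>a0$x\<bar> ^ (j x - b x) \<le> B ^ (j x - b x)" by (intro power_mono) auto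
    also have "\<dots> \<le> B ^ d" using B jx by (intro power_increasing) auto
    finally have c2: "\<bar>a0$x\<bar> ^ (j x - b x) \<le> B ^ d" .
    show "real (j x choose b x) * \<bar>a0 $ x\<bar> ^ (j x - b x) \<le> 2 ^ d * B ^ d"
      using c1 c2 by (intro mult_mono) auto
    show "0 \<le> real (j x choose b x) * \<bar>a0 $ x\<bar> ^ (j x - b x)" by simp
  qed
  also have "\<dots> = (2 ^ d * B ^ d) ^ CARD('n)" by simp
  finally show ?thesis .
next
  case False
  then have "tt a0 b j = 0" by (auto simp: tt_def)
  then show ?thesis using B by simp
qed

theorem theorem4p1:
  fixes d :: nat
    and r :: "nat \<Rightarrow> real"
    and a :: "nat \<Rightarrow> nat \<Rightarrow> real^'n::finite"
    and xi0 :: "real^'n"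
    and c :: real
    and X :: "(real^'n) set"
  assumes rpos: "\<And>k. r k > 0"
    and distinct: "\<And>k. inj_on (a k) {..NN TYPE('n) d}"
    and ball: "\<And>k i. i \<le> NN TYPE('n) d \<Longrightarrow> a k i \<in> cball (a k 0) (r k)"
    and lim_a: "(\<lambda>k. a k 0) \<longlonglongrightarrow> xi0"
    and lim_r: "r \<longlonglongrightarrow> 0"
    and cpos: "c > 0"
    and vdet: "\<And>k. abs_vdet d (a k) \<ge> c * r k ^ (CARD('n) * Nd (CARD('n) + 1) (int d - 1))"
    and closedX: "closed X"
    and inX: "\<And>k i. i \<le> NN TYPE('n) d \<Longrightarrow> a k i \<in> X"
  shows "paratangent X d xi0 = Pdual d"
proof -
  define N where "N = NN TYPE('n) d"
  have xiX: "xi0 \<in> X"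
    using closed_sequentially[OF closedX _ lim_a] inX[of 0] by auto
  obtain B0 where B0: "B0 > 0" "\<And>k. norm (a k 0) \<le> B0"
    using BseqE[OF convergent_imp_Bseq[OF convergentI[OF lim_a]]] by metis
  define B where "B = max 1 B0"
  have B: "B \<ge> 1" "\<And>k. norm (a k 0) \<le> B" unfolding B_def
    by simp (rule order_trans[OF B0(2)], simp)
  define KT where "KT = (2 ^ d * B ^ d) ^ CARD('n)"
  have KT1: "KT \<ge> 1" unfolding KT_def
  proof (intro one_le_power)
    have "(1::real) \<le> 2 ^ d" by simp
    moreover have "1 \<le> B ^ d" using B(1) by (rule one_le_power)
    ultimately show "1 \<le> 2 ^ d * B ^ d" using mult_mono[of 1 "2^d" 1 "B^d"] by simp
  qed
  have KT: "\<And>k b j. b \<in> mons d \<Longrightarrow> j \<in> mons d \<Longrightarrow> \<bar>tt (a k 0) b j\<bar> \<le> KT"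
    unfolding KT_def using tt_bound B by blast
  have ex_e: "\<exists>e. bij_betw e {..N} (mons d :: ('n \<Rightarrow> nat) set)"
  proof -
    obtain h where h: "bij_betw h {0..<card (mons d :: ('n \<Rightarrow> nat) set)} (mons d :: ('n \<Rightarrow> nat) set)"
      using ex_bij_betw_nat_finite[OF mons_finite[where 'n='n and d=d]] by blast
    have "{0..<card (mons d :: ('n \<Rightarrow> nat) set)} = {..N}" unfolding NN_card N_def by auto
    then show ?thesis using h by auto
  qed
  define e where "e = (SOME e. bij_betw e {..N} (mons d :: ('n \<Rightarrow> nat) set))"
  have e: "bij_betw e {..N} (mons d :: ('n \<Rightarrow> nat) set)"
    unfolding e_def using someI_ex[OF ex_e] .
  have avd: "abs_vdet d (a k) = \<bar>ldet N (\<lambda>i l. Defs.monom (a k i) (e l))\<bar>" for k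
    unfolding abs_vdet_def Let_def e_def N_def ..
  have detk: "c * r k ^ (\<Sum>b\<in>(mons d :: ('n \<Rightarrow> nat) set). sum b UNIV) \<le> \<bar>ldet N (\<lambda>i l. Defs.monom (a k i) (e l))\<bar>" for k
    using vdet[of k] unfolding avd mons_sum .
  have ballk: "norm (a k i - a k 0) \<le> r k" if "i \<le> N" for k i
    using ball[of i k] that unfolding N_def by (simp add: dist_norm norm_minus_commute)
  have r1: "\<forall>\<^sub>F k in sequentially. r k < 1"
    using lim_r by (rule order_tendstoD) simp
  show ?thesis
  proof
    show "paratangent X d xi0 \<subseteq> Pdual d"
      unfolding paratangent_def using good_Ek[of X d] unfolding good_def by blast
    show "Pdual d \<subseteq> paratangent X d xi0"
    proof
      fix eta :: "('n \<Rightarrow> nat) \<Rightarrow> real" assume eta: "eta \<in> Pdual d"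
      define Ke where "Ke = (\<Sum>j\<in>(mons d :: ('n \<Rightarrow> nat) set). \<bar>eta j\<bar>)"
      have Ke: "\<bar>eta j\<bar> \<le> Ke" if "j \<in> mons d" for j
        unfolding Ke_def using that mons_finite by (intro member_le_sum) auto
      have Ke0: "Ke \<ge> 0" unfolding Ke_def by (intro sum_nonneg) auto
      define C0 where "C0 = (1/c) * (real (Suc N) * fact (Suc N)) *
                 (real (Suc N) * (fact (Suc N) * KT ^ Suc N) * Ke)"
      have C0: "C0 \<ge> 0" unfolding C0_def using cpos Ke0 KT1 by simp
      define t where "t = 1 / (C0 + 1)"
      have t: "t > 0" "t * C0 \<le> 1" using C0 unfolding t_def by (auto simp: field_simps)
      define pk where "pk k = (\<lambda>i. if i \<le> N then a k i else 0)" for k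
      have inD: "\<forall>\<^sub>F k in sequentially. (pk k, (\<lambda>j. t * eta j)) \<in> DeltaE X d (E0 X d)"
        using r1
      proof eventually_elim
        case (elim k)
        obtain lam where lam1: "\<forall>j\<in>mons d. (\<Sum>i\<le>N. lam i * Defs.monom (a k i) j) = eta j"
          and lam2: "\<forall>i\<le>N. \<bar>lam i\<bar> * r k ^ d \<le> C0"
          using core_k[of "r k" e d "a k" c KT eta Ke] rpos[of k] elim e ballk detk cpos KT KT1 Ke
          unfolding C0_def N_def by auto
        define xis where "xis i = (\<lambda>j. (t * lam i) * delta d (a k i) j)" for i
        show ?case unfolding DeltaE_def
        proof (clarify, intro conjI exI[of _ xis])
          show "\<forall>i>NN TYPE('n) d. pk k i = 0" by (simp add: pk_def N_def)
          show "(\<lambda>j. t * eta j) = (\<lambda>j. \<Sum>i\<le>NN TYPE('n) d. xis i j)"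
          proof
            fix j :: "'n \<Rightarrow> nat"
            show "t * eta j = (\<Sum>i\<le>NN TYPE('n) d. xis i j)"
            proof (cases "j \<in> mons d")
              case True
              then have "(\<Sum>i\<le>NN TYPE('n) d. lam i * Defs.monom (a k i) j) = eta j"
                using lam1 unfolding N_def by blast
              then show ?thesis using True unfolding xis_def delta_def
                by (simp add: sum_distrib_left[symmetric] mult.assoc)
            next
              case False
              then show ?thesis using eta unfolding xis_def delta_def Pdual_def by simp
            qed
          qed
          show "\<forall>i\<le>NN TYPE('n) d. pk k i \<in> X \<and> xis i \<in> E0 X d (pk k i) \<and>
            (\<forall>alpha\<in>mons d. norm (pk k i - pk k 0) ^ (d - sum alpha UNIV) *
               \<bar>shift_eval d (xis i) (pk k i) alpha\<bar> \<le> 1)"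
          proof (intro allI impI conjI ballI)
            fix i assume i: "i \<le> NN TYPE('n) d"
            then have i': "i \<le> N" by (simp add: N_def)
            show "pk k i \<in> X" using inX[OF i] i' by (simp add: pk_def)
            show "xis i \<in> E0 X d (pk k i)" using inX[OF i] i' by (auto simp: pk_def xis_def E0_def)
            fix al :: "'n \<Rightarrow> nat" assume al: "al \<in> mons d"
            have se: "shift_eval d (xis i) (pk k i) al = (if al = (\<lambda>_. 0) then t * lam i else 0)"
              using i' unfolding xis_def pk_def by (simp add: shift_delta[OF al])
            show "norm (pk k i - pk k 0) ^ (d - sum al UNIV) * \<bar>shift_eval d (xis i) (pk k i) al\<bar> \<le> 1"
            proof (cases "al = (\<lambda>_. 0)")
              case True
              have "norm (pk k i - pk k 0) ^ d \<le> r k ^ d"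
                using ballk[OF i'] i' by (simp add: pk_def power_mono)
              then have "norm (pk k i - pk k 0) ^ d * \<bar>t * lam i\<bar> \<le> r k ^ d * \<bar>t * lam i\<bar>"
                by (intro mult_right_mono) auto
              also have "\<dots> = t * (\<bar>lam i\<bar> * r k ^ d)" using t by (simp add: abs_mult)
              also have "\<dots> \<le> t * C0" using lam2 i' t by (intro mult_left_mono) auto
              finally show ?thesis using True se t by simp
            next
              case False
              then show ?thesis using se by simp
            qed
          qed
        qed
      qed
      have lim_ai: "(\<lambda>k. a k i) \<longlonglongrightarrow> xi0" if "i \<le> N" for i
      proof -
        have "(\<lambda>k. a k i - a k 0) \<longlonglongrightarrow> 0"
          by (rule Lim_null_comparison[OF _ lim_r]) (use ballk[OF that] in auto)
        from tendsto_add[OF lim_a this] show ?thesis by simp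
      qed
      have lim_pk: "pk \<longlonglongrightarrow> diag d xi0"
        unfolding tendsto_fun_iff
      proof
        fix i
        show "(\<lambda>k. pk k i) \<longlonglongrightarrow> diag d xi0 i"
          using lim_ai[of i] unfolding pk_def diag_def N_def by (cases "i \<le> NN TYPE('n) d") auto
      qed
      have "(diag d xi0, (\<lambda>j. t * eta j)) \<in> closure (DeltaE X d (E0 X d))"
        by (rule Lim_in_closed_set[OF closed_closure _ trivial_limit_sequentially
              tendsto_Pair[OF lim_pk tendsto_const]])
           (use inD in \<open>auto elim: eventually_mono intro: closure_subset[THEN subsetD]\<close>)
      then have "(\<lambda>j. t * eta j) \<in> Eprime X d (E0 X d) xi0"
        unfolding Eprime_def using xiX by simp
      then have "(\<lambda>j. (1/t) * (t * eta j)) \<in> Estep X d (E0 X d) xi0"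
        unfolding Estep_def using xiX lspan_single[of "\<lambda>j. t * eta j" _ "1/t"] by simp
      then have "eta \<in> Ek X d 1 xi0" using t by (simp add: Ek_def)
      moreover have "1 \<le> 2 * Nd CARD('n) (int d)"
        using NN_card[where 'n='n and d=d] mons_card[where 'n='n and d=d] by simp
      ultimately show "eta \<in> paratangent X d xi0"
        unfolding paratangent_def using Ek_mono by blast
    qed
  qed
qed

end
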